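(* For $\varepsilon\in[0,1]$, let $C(\varepsilon)$ be the infimum of the Chernoff information $C(P,Q)$ over all pairs of probability distributions $P,Q$ (on a common countable set) with $d_{\mathrm{TV}}(P,Q)=\varepsilon$. Then this infimum is attained (it is a minimum) and $$C(\varepsilon)=\begin{cases}-\tfrac12\log(1-\varepsilon^2), & \varepsilon\in[0,1),\\ +\infty, & \varepsilon=1.\end{cases}$$ For $\varepsilon\in[0,1)$ the minimum is achieved by the 2-element distributions $P=\left(\frac{1-\varepsilon}{2},\frac{1+\varepsilon}{2}\right)$, $Q=\left(\frac{1+\varepsilon}{2},\frac{1-\varepsilon}{2}\right)$.
   Context: For probability distributions $P,Q$ on a common countable set: the total variation distance is $d_{\mathrm{TV}}(P,Q)=\frac12\sum_x |P(x)-Q(x)|$, and the Chernoff information is $C(P,Q)=-\min_{\lambda\in[0,1]}\log\left(\sum_x P(x)^{\lambda}Q(x)^{1-\lambda}\right)$ (with $\log 0=-\infty$, so $C(P,Q)$ may be $+\infty$). Logarithms are natural. *)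

theory Defs
  imports "HOL-Probability.Probability"
begin

text \<open>Probability distributions on a common countable set are modelled as
  probability mass functions on nat (every countable set injects into nat).\<close>

definition tv_dist :: "nat pmf \<Rightarrow> nat pmf \<Rightarrow> real" where
  "tv_dist P Q = (1/2) * (\<Sum>\<^sub>\<infinity>x. \<bar>pmf P x - pmf Q x\<bar>)"

definition elog :: "real \<Rightarrow> ereal" where
  "elog s = (if s = 0 then -\<infinity> else ereal (ln s))"

definition bhatt_sum :: "nat pmf \<Rightarrow> nat pmf \<Rightarrow> real \<Rightarrow> real" where
  "bhatt_sum P Q l = (\<Sum>\<^sub>\<infinity>x. pmf P x powr l * pmf Q x powr (1 - l))"

definition chernoff :: "nat pmf \<Rightarrow> nat pmf \<Rightarrow> ereal" where
  "chernoff P Q = - (INF l\<in>{0..1}. elog (bhatt_sum P Q l))"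

definition chernoff_min :: "real \<Rightarrow> ereal" where
  "chernoff_min \<epsilon> = (INF PQ\<in>{(P, Q). tv_dist P Q = \<epsilon>}. chernoff (fst PQ) (snd PQ))"

end

theory Submission
  imports Defs
begin


lemma pmf_summable: "pmf P summable_on UNIV"
proof -
  have "Infinite_Sum.abs_summable_on (pmf P) UNIV"
    using abs_summable_equivalent pmf_abs_summable by blast
  then show ?thesis by (simp add: pmf_nonneg)
qed

lemma pmf_infsum: "infsum (pmf P) UNIV = 1"
  using infsetsum_infsum[OF pmf_abs_summable, of P UNIV] infsetsum_pmf_eq_1[of P UNIV] by simp

lemma sums_infsum_nat: "(f::nat\<Rightarrow>real) summable_on UNIV \<Longrightarrow> f sums infsum f UNIV"
  by (intro has_sum_imp_sums has_sum_infsum)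

lemma bhatt_bound:
  fixes P Q :: "nat pmf"
  defines "B \<equiv> infsum (\<lambda>x. sqrt (pmf P x * pmf Q x)) UNIV"
  shows "B\<^sup>2 \<le> 1 - (tv_dist P Q)\<^sup>2"
proof -
  define p where "p = pmf P"
  define q where "q = pmf Q"
  define g where "g = (\<lambda>x. sqrt (p x * q x))"
  define d where "d = (\<lambda>x. \<bar>p x - q x\<bar>)"
  have p0: "\<And>x. p x \<ge> 0" and q0: "\<And>x. q x \<ge> 0" by (simp_all add: p_def q_def)
  have ps: "p summable_on UNIV" and qs: "q summable_on UNIV"
    by (simp_all add: p_def q_def pmf_summable)
  have pqs: "(\<lambda>x. p x + q x) summable_on UNIV" using summable_on_add[OF ps qs] by simp
  have gle: "g x \<le> p x + q x" for x
  proof -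
    have "g x \<le> (p x + q x)/2" unfolding g_def
      using arith_geo_mean_sqrt[OF p0 q0] by simp
    moreover have "(p x + q x)/2 \<le> p x + q x" using p0[of x] q0[of x] by simp
    ultimately show ?thesis by (rule order_trans)
  qed
  have gs: "g summable_on UNIV"
    by (rule summable_on_comparison_test[OF pqs]) (use gle in \<open>auto simp: g_def p0 q0\<close>)
  have ds: "d summable_on UNIV"
    by (rule summable_on_comparison_test[OF pqs]) (auto simp: d_def p0 q0 abs_le_iff)
  have tv: "tv_dist P Q = infsum d UNIV / 2" by (simp add: tv_dist_def d_def p_def q_def)
  have Bg: "B = infsum g UNIV" by (simp add: B_def g_def p_def q_def)
  have p1: "p sums 1" using sums_infsum_nat[OF ps] by (simp add: p_def pmf_infsum)
  have q1: "q sums 1" using sums_infsum_nat[OF qs] by (simp add: q_def pmf_infsum)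
  have gB: "g sums B" using sums_infsum_nat[OF gs] Bg by simp
  have dD: "d sums infsum d UNIV" using sums_infsum_nat[OF ds] .
  have ineq: "(\<Sum>i<n. d i)\<^sup>2 \<le> ((\<Sum>i<n. p i) + (\<Sum>i<n. q i))\<^sup>2 - 4 * (\<Sum>i<n. g i)\<^sup>2" for n
  proof -
    define a where "a = (\<lambda>i. \<bar>sqrt (p i) - sqrt (q i)\<bar>)"
    define b where "b = (\<lambda>i. sqrt (p i) + sqrt (q i))"
    have sq: "sqrt (p i) * sqrt (q i) = g i" for i by (simp add: g_def real_sqrt_mult)
    have ab: "a i * b i = d i" for i
    proof -
      have "a i * b i = \<bar>(sqrt (p i) - sqrt (q i)) * (sqrt (p i) + sqrt (q i))\<bar>"
        using p0[of i] q0[of i] by (simp add: a_def b_def abs_mult)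
      also have "(sqrt (p i) - sqrt (q i)) * (sqrt (p i) + sqrt (q i)) = p i - q i"
        using p0[of i] q0[of i] by (simp add: algebra_simps)
      finally show ?thesis by (simp add: d_def)
    qed
    have a2: "(a i)\<^sup>2 = p i + q i - 2 * g i" for i
      using p0[of i] q0[of i] sq[of i] by (simp add: a_def power2_eq_square algebra_simps)
    have b2: "(b i)\<^sup>2 = p i + q i + 2 * g i" for i
      using p0[of i] q0[of i] sq[of i] by (simp add: b_def power2_eq_square algebra_simps)
    have "(\<Sum>i<n. d i)\<^sup>2 \<le> (\<Sum>i<n. (a i)\<^sup>2) * (\<Sum>i<n. (b i)\<^sup>2)"
      using Cauchy_Schwarz_ineq_sum[of a b "{..<n}"] by (simp add: ab)
    also have "\<dots> = ((\<Sum>i<n. p i) + (\<Sum>i<n. q i))\<^sup>2 - 4 * (\<Sum>i<n. g i)\<^sup>2"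
    proof -
      have "(\<Sum>i<n. (a i)\<^sup>2) = (\<Sum>i<n. p i) + (\<Sum>i<n. q i) - 2 * (\<Sum>i<n. g i)"
        by (simp add: a2 sum.distrib sum_subtractf sum_distrib_left)
      moreover have "(\<Sum>i<n. (b i)\<^sup>2) = (\<Sum>i<n. p i) + (\<Sum>i<n. q i) + 2 * (\<Sum>i<n. g i)"
        by (simp add: b2 sum.distrib sum_distrib_left)
      ultimately show ?thesis by (simp only:) (simp add: power2_eq_square algebra_simps)
    qed
    finally show ?thesis .
  qed
  have "(infsum d UNIV)\<^sup>2 \<le> (1 + 1)\<^sup>2 - 4 * B\<^sup>2"
  proof (rule LIMSEQ_le[OF _ _ exI[of _ 0]])
    show "(\<lambda>n. (\<Sum>i<n. d i)\<^sup>2) \<longlonglongrightarrow> (infsum d UNIV)\<^sup>2"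
      using dD unfolding sums_def by (intro tendsto_intros)
    show "(\<lambda>n. ((\<Sum>i<n. p i) + (\<Sum>i<n. q i))\<^sup>2 - 4 * (\<Sum>i<n. g i)\<^sup>2) \<longlonglongrightarrow> (1 + 1)\<^sup>2 - 4 * B\<^sup>2"
      using p1 q1 gB unfolding sums_def by (intro tendsto_intros)
    show "\<forall>n\<ge>0. (\<Sum>i<n. d i)\<^sup>2 \<le> ((\<Sum>i<n. p i) + (\<Sum>i<n. q i))\<^sup>2 - 4 * (\<Sum>i<n. g i)\<^sup>2"
      using ineq by blast
  qed
  then show ?thesis by (simp add: tv power_divide)
qed


lemma bhatt_half: "bhatt_sum P Q (1/2) = infsum (\<lambda>x. sqrt (pmf P x * pmf Q x)) UNIV"
  unfolding bhatt_sum_def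
  by (intro infsum_cong) (simp add: powr_half_sqrt real_sqrt_mult)

lemma chernoff_ge_half: "chernoff P Q \<ge> - elog (bhatt_sum P Q (1/2))"
proof -
  have "(INF l\<in>{0..1}. elog (bhatt_sum P Q l)) \<le> elog (bhatt_sum P Q (1/2))"
    by (rule INF_lower) auto
  then show ?thesis unfolding chernoff_def by (simp add: ereal_uminus_le_reorder)
qed

lemma chernoff_lower:
  assumes "tv_dist P Q = \<epsilon>" "0 \<le> \<epsilon>" "\<epsilon> \<le> 1"
  shows "chernoff P Q \<ge> (if \<epsilon> < 1 then ereal (- (1/2) * ln (1 - \<epsilon>\<^sup>2)) else \<infinity>)"
proof -
  define B where "B = bhatt_sum P Q (1/2)"
  have B2: "B\<^sup>2 \<le> 1 - \<epsilon>\<^sup>2" using bhatt_bound[of P Q] assms(1) by (simp add: B_def bhatt_half)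
  have B0: "B \<ge> 0" unfolding B_def bhatt_half by (rule infsum_nonneg) auto
  have ch: "chernoff P Q \<ge> - elog B" using chernoff_ge_half B_def by simp
  show ?thesis
  proof (cases "B = 0")
    case True
    then have "chernoff P Q = \<infinity>" using ch by (simp add: elog_def)
    then show ?thesis by simp
  next
    case False
    then have Bp: "B > 0" using B0 by simp
    then have "0 < 1 - \<epsilon>\<^sup>2" using B2 by (smt (verit) zero_less_power)
    then have e1: "\<epsilon> < 1" using assms(2,3) by (cases "\<epsilon> = 1") auto
    have "ln (B\<^sup>2) \<le> ln (1 - \<epsilon>\<^sup>2)" using B2 Bp by (simp add: ln_mono)
    then have "2 * ln B \<le> ln (1 - \<epsilon>\<^sup>2)" using Bp by (simp add: ln_realpow)
    then have "ereal (- (1/2) * ln (1 - \<epsilon>\<^sup>2)) \<le> - elog B"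
      using Bp by (simp add: elog_def)
    then show ?thesis using ch e1 by simp
  qed
qed

lemma infsum_two: "(\<And>x. x \<noteq> 0 \<Longrightarrow> x \<noteq> 1 \<Longrightarrow> (f::nat\<Rightarrow>real) x = 0) \<Longrightarrow> infsum f UNIV = f 0 + f 1"
proof -
  assume h: "\<And>x. x \<noteq> 0 \<Longrightarrow> x \<noteq> 1 \<Longrightarrow> f x = 0"
  have "infsum f UNIV = infsum f {0,1}"
    by (rule infsum_cong_neutral) (use h in auto)
  then show ?thesis by simp
qed

lemma pmf_two_zero:
  fixes P :: "nat pmf"
  assumes "pmf P 0 + pmf P 1 = 1" "x \<noteq> 0" "x \<noteq> 1"
  shows "pmf P x = 0"
proof -
  have "measure (measure_pmf P) {0,1,x} \<le> 1" by simp
  then have "sum (pmf P) {0,1,x} \<le> 1" by (simp add: measure_measure_pmf_finite)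
  moreover have "{0,1,x} = insert x {0,1::nat}" by auto
  ultimately have "pmf P 0 + pmf P 1 + pmf P x \<le> 1" using assms(2,3) by (simp add: sum.insert)
  then show ?thesis using assms(1) pmf_nonneg[of P x] by simp
qed

lemma two_point_tv:
  assumes "0 \<le> \<epsilon>" "\<epsilon> \<le> 1"
    and "pmf P 0 = (1 - \<epsilon>) / 2" "pmf P 1 = (1 + \<epsilon>) / 2"
    and "pmf Q 0 = (1 + \<epsilon>) / 2" "pmf Q 1 = (1 - \<epsilon>) / 2"
  shows "tv_dist P Q = \<epsilon>"
proof -
  have sP: "pmf P 0 + pmf P 1 = 1" unfolding assms(3,4) by (simp add: field_simps)
  have zP: "pmf P x = 0" if "x \<noteq> 0" "x \<noteq> 1" for x
    using pmf_two_zero[OF sP that] .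
  have sQ: "pmf Q 0 + pmf Q 1 = 1" unfolding assms(5,6) by (simp add: field_simps)
  have zQ: "pmf Q x = 0" if "x \<noteq> 0" "x \<noteq> 1" for x
    using pmf_two_zero[OF sQ that] .
  have "(\<Sum>\<^sub>\<infinity>x. \<bar>pmf P x - pmf Q x\<bar>) = \<bar>pmf P 0 - pmf Q 0\<bar> + \<bar>pmf P 1 - pmf Q 1\<bar>"
    by (rule infsum_two) (simp add: zP zQ)
  also have "\<dots> = 2 * \<epsilon>" using assms by simp
  finally show ?thesis by (simp add: tv_dist_def)
qed

lemma two_point_chernoff:
  assumes "0 \<le> \<epsilon>" "\<epsilon> < 1"
    and "pmf P 0 = (1 - \<epsilon>) / 2" "pmf P 1 = (1 + \<epsilon>) / 2"
    and "pmf Q 0 = (1 + \<epsilon>) / 2" "pmf Q 1 = (1 - \<epsilon>) / 2"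
  shows "chernoff P Q = ereal (- (1/2) * ln (1 - \<epsilon>\<^sup>2))"
proof -
  define a where "a = (1 - \<epsilon>) / 2"
  define b where "b = (1 + \<epsilon>) / 2"
  have a0: "a > 0" and b0: "b > 0" using assms by (simp_all add: a_def b_def)
  have ab: "4 * (a * b) = 1 - \<epsilon>\<^sup>2" by (simp add: a_def b_def power2_eq_square field_simps)
  have sP: "pmf P 0 + pmf P 1 = 1" unfolding assms(3,4) by (simp add: field_simps)
  have zP: "pmf P x = 0" if "x \<noteq> 0" "x \<noteq> 1" for x
    using pmf_two_zero[OF sP that] .
  have sQ: "pmf Q 0 + pmf Q 1 = 1" unfolding assms(5,6) by (simp add: field_simps)
  have zQ: "pmf Q x = 0" if "x \<noteq> 0" "x \<noteq> 1" for x
    using pmf_two_zero[OF sQ that] .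
  have bs: "bhatt_sum P Q l = a powr l * b powr (1 - l) + b powr l * a powr (1 - l)" for l
  proof -
    have "bhatt_sum P Q l = pmf P 0 powr l * pmf Q 0 powr (1-l) + pmf P 1 powr l * pmf Q 1 powr (1-l)"
      unfolding bhatt_sum_def by (rule infsum_two) (simp add: zP zQ)
    also have "\<dots> = a powr l * b powr (1 - l) + b powr l * a powr (1 - l)"
      by (simp only: assms(3-6) a_def b_def)
    finally show ?thesis .
  qed
  define m where "m = sqrt (1 - \<epsilon>\<^sup>2)"
  have m0: "m > 0" using ab a0 b0 unfolding m_def by (metis mult_pos_pos real_sqrt_gt_zero zero_less_numeral)
  have lower: "bhatt_sum P Q l \<ge> m" for l
  proof -
    define x where "x = a powr l * b powr (1 - l)"
    define y where "y = b powr l * a powr (1 - l)"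
    have x0: "x \<ge> 0" and y0: "y \<ge> 0" by (simp_all add: x_def y_def)
    have "x * y = (a * b) powr l * (a * b) powr (1 - l)"
      using a0 b0 by (simp add: x_def y_def powr_mult)
    also have "\<dots> = a * b" using a0 b0 by (simp add: powr_add[symmetric])
    finally have xy: "x * y = a * b" .
    have "sqrt (x * y) \<le> (x + y) / 2" by (rule arith_geo_mean_sqrt[OF x0 y0])
    moreover have "m = 2 * sqrt (x * y)" unfolding m_def xy ab[symmetric]
      by (simp add: real_sqrt_mult)
    ultimately show ?thesis by (simp add: bs x_def y_def)
  qed
  have half: "bhatt_sum P Q (1/2) = m"
  proof -
    have "bhatt_sum P Q (1/2) = 2 * (sqrt a * sqrt b)"
      using a0 b0 by (simp add: bs powr_half_sqrt)
    also have "\<dots> = m" unfolding m_def ab[symmetric]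
      by (simp add: real_sqrt_mult)
    finally show ?thesis .
  qed
  have "(INF l\<in>{0..1}. elog (bhatt_sum P Q l)) = elog m"
  proof (rule antisym)
    show "(INF l\<in>{0..1}. elog (bhatt_sum P Q l)) \<le> elog m"
      by (rule INF_lower2[of "1/2"]) (auto simp: half)
    show "elog m \<le> (INF l\<in>{0..1}. elog (bhatt_sum P Q l))"
    proof (rule INF_greatest)
      fix l :: real
      have "m \<le> bhatt_sum P Q l" by (rule lower)
      then show "elog m \<le> elog (bhatt_sum P Q l)" using m0 by (simp add: elog_def)
    qed
  qed
  moreover have "ln m = (1/2) * ln (1 - \<epsilon>\<^sup>2)" unfolding m_def
    using ab a0 b0 by (subst ln_sqrt) (auto, smt (verit) mult_pos_pos)
  ultimately show ?thesis unfolding chernoff_def using m0 by (simp add: elog_def)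
qed


lemma two_point_exists:
  assumes "0 \<le> \<epsilon>" "\<epsilon> \<le> 1"
  shows "\<exists>(P :: nat pmf) (Q :: nat pmf). pmf P 0 = (1 - \<epsilon>) / 2 \<and> pmf P 1 = (1 + \<epsilon>) / 2 \<and>
                 pmf Q 0 = (1 + \<epsilon>) / 2 \<and> pmf Q 1 = (1 - \<epsilon>) / 2"
proof -
  define P where "P = pmf_of_list [(0::nat, (1 - \<epsilon>) / 2), (1, (1 + \<epsilon>) / 2)]"
  define Q where "Q = pmf_of_list [(0::nat, (1 + \<epsilon>) / 2), (1, (1 - \<epsilon>) / 2)]"
  have wP: "pmf_of_list_wf [(0::nat, (1 - \<epsilon>) / 2), (1, (1 + \<epsilon>) / 2)]"
    using assms by (intro pmf_of_list_wfI) (auto simp: field_simps)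
  have wQ: "pmf_of_list_wf [(0::nat, (1 + \<epsilon>) / 2), (1, (1 - \<epsilon>) / 2)]"
    using assms by (intro pmf_of_list_wfI) (auto simp: field_simps)
  show ?thesis
    by (rule exI[of _ P], rule exI[of _ Q]) (unfold P_def Q_def pmf_pmf_of_list[OF wP] pmf_pmf_of_list[OF wQ], simp)
qed

theorem proposition2:
  fixes \<epsilon> :: real
  assumes "0 \<le> \<epsilon>" and "\<epsilon> \<le> 1"
  shows "chernoff_min \<epsilon> =
           (if \<epsilon> < 1 then ereal (- (1/2) * ln (1 - \<epsilon>\<^sup>2)) else \<infinity>)
     \<and> (\<exists>P Q. tv_dist P Q = \<epsilon> \<and> chernoff P Q = chernoff_min \<epsilon>)
     \<and> (\<epsilon> < 1 \<longrightarrow>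
          (\<forall>P Q. pmf P 0 = (1 - \<epsilon>) / 2 \<and> pmf P 1 = (1 + \<epsilon>) / 2 \<and>
                 pmf Q 0 = (1 + \<epsilon>) / 2 \<and> pmf Q 1 = (1 - \<epsilon>) / 2 \<longrightarrow>
                 tv_dist P Q = \<epsilon> \<and> chernoff P Q = chernoff_min \<epsilon>))"
proof -
  define V where "V = (if \<epsilon> < 1 then ereal (- (1/2) * ln (1 - \<epsilon>\<^sup>2)) else \<infinity>)"
  obtain P0 Q0 :: "nat pmf" where h0: "pmf P0 0 = (1 - \<epsilon>) / 2" "pmf P0 1 = (1 + \<epsilon>) / 2"
      "pmf Q0 0 = (1 + \<epsilon>) / 2" "pmf Q0 1 = (1 - \<epsilon>) / 2"
    using two_point_exists[OF assms] by blast
  have tv0: "tv_dist P0 Q0 = \<epsilon>" using two_point_tv[OF assms h0] .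
  have ge: "V \<le> chernoff_min \<epsilon>"
    unfolding chernoff_min_def V_def
  proof (rule INF_greatest)
    fix PQ assume "PQ \<in> {(P, Q). tv_dist P Q = \<epsilon>}"
    then have "tv_dist (fst PQ) (snd PQ) = \<epsilon>" by auto
    from chernoff_lower[OF this assms]
    show "(if \<epsilon> < 1 then ereal (- (1/2) * ln (1 - \<epsilon>\<^sup>2)) else \<infinity>) \<le> chernoff (fst PQ) (snd PQ)" .
  qed
  have le0: "chernoff_min \<epsilon> \<le> chernoff P0 Q0"
    unfolding chernoff_min_def by (rule INF_lower2[of "(P0, Q0)"]) (auto simp: tv0)
  have ch0: "V \<le> chernoff P0 Q0" using chernoff_lower[OF tv0 assms] by (simp add: V_def)
  have eqV: "chernoff_min \<epsilon> = V"
  proof (cases "\<epsilon> < 1")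
    case True
    then have "chernoff P0 Q0 = V" using two_point_chernoff[OF assms(1) True h0] by (simp add: V_def)
    then show ?thesis using ge le0 by simp
  next
    case False
    then show ?thesis using ge by (simp add: V_def)
  qed
  have c0: "chernoff P0 Q0 = chernoff_min \<epsilon>"
  proof (cases "\<epsilon> < 1")
    case True
    then show ?thesis using two_point_chernoff[OF assms(1) True h0] eqV by (simp add: V_def)
  next
    case False
    then show ?thesis using ch0 eqV by (simp add: V_def)
  qed
  have third: "\<epsilon> < 1 \<longrightarrow>
          (\<forall>P Q. pmf P 0 = (1 - \<epsilon>) / 2 \<and> pmf P 1 = (1 + \<epsilon>) / 2 \<and>
                 pmf Q 0 = (1 + \<epsilon>) / 2 \<and> pmf Q 1 = (1 - \<epsilon>) / 2 \<longrightarrow>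
                 tv_dist P Q = \<epsilon> \<and> chernoff P Q = chernoff_min \<epsilon>)"
  proof (intro impI allI)
    fix P Q :: "nat pmf"
    assume e1: "\<epsilon> < 1" and h: "pmf P 0 = (1 - \<epsilon>) / 2 \<and> pmf P 1 = (1 + \<epsilon>) / 2 \<and>
                 pmf Q 0 = (1 + \<epsilon>) / 2 \<and> pmf Q 1 = (1 - \<epsilon>) / 2"
    show "tv_dist P Q = \<epsilon> \<and> chernoff P Q = chernoff_min \<epsilon>"
      using two_point_tv[OF assms] two_point_chernoff[OF assms(1) e1] h eqV e1
      by (simp add: V_def)
  qed
  show ?thesis using eqV tv0 c0 third unfolding V_def by blast
qed

end
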